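(* Let $d\ge3$, $\Omega=\{1,\ldots,d\}$, and $F\le F'\le\mathrm{Sym}(\Omega)$ with $F'$ preserving the orbits of $F$, $F$ nontrivial and $F'$ 2-transitive on $\Omega$. Let $G^+\le G(F,F')$ be the subgroup of elements $g$ such that $d(v,gv)$ is even for some (equivalently every) vertex $v$ of $T$. Then there exists a geodesic line $L$ in $T$ whose set-wise stabilizer in $G^+$ contains an element translating $L$ by distance $2$ and an element fixing a vertex $v_0\in L$ and reversing the orientation of $L$; consequently the set-wise stabilizer of $L$ in $G^+$ acts transitively on the geometric edges of $L$.
   Context: Let $T=\mathcal{T}_d$ be the $d$-regular tree with a fixed edge coloring $c\colon E(T)\to\Omega$ whose restriction $c_v$ to the edges $E(v)$ at each vertex $v$ is a bijection onto $\Omega$. For $g\in\mathrm{Aut}(T)$, $\sigma(g,v)=c_{gv}\circ g_v\circ c_v^{-1}$ with $g_v\colon E(v)\to E(gv)$ induced by $g$. $U(F')=\{g:\sigma(g,v)\in F'\ \forall v\}$, $G(F)=\{g:\sigma(g,v)\in F$ for all but finitely many $v\}$, $G(F,F')=G(F)\cap U(F')$. A geometric edge of $L$ is an unordered pair of adjacent vertices of $L$. *)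

theory Defs
  imports Main "HOL-Combinatorics.Permutations"
begin

text \<open>Concrete model of the d-regular tree with a legal edge colouring:
 vertices are reduced words over \<Omega> = {1..d} (no two consecutive letters equal);
 w and w @ [i] are adjacent and the edge between them has colour i.\<close>

definition Omega :: "nat \<Rightarrow> nat set" where
  "Omega d = {1..d}"

definition verts :: "nat \<Rightarrow> nat list set" where
  "verts d = {w. set w \<subseteq> Omega d \<and> successively (\<noteq>) w}"

definition adj :: "nat list \<Rightarrow> nat list \<Rightarrow> bool" where
  "adj v w \<longleftrightarrow> (\<exists>i. w = v @ [i]) \<or> (\<exists>i. v = w @ [i])"

definition col :: "nat list \<Rightarrow> nat list \<Rightarrow> nat" where
  "col a b = (if b \<noteq> [] \<and> butlast b = a then last b else last a)"

definition nbr :: "nat list \<Rightarrow> nat \<Rightarrow> nat list" where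
  "nbr v i = (if v \<noteq> [] \<and> last v = i then butlast v else v @ [i])"

fun lcp :: "nat list \<Rightarrow> nat list \<Rightarrow> nat" where
  "lcp (x # xs) (y # ys) = (if x = y then Suc (lcp xs ys) else 0)"
| "lcp _ _ = 0"

definition tdist :: "nat list \<Rightarrow> nat list \<Rightarrow> nat" where
  "tdist v w = length v + length w - 2 * lcp v w"

definition Aut :: "nat \<Rightarrow> (nat list \<Rightarrow> nat list) set" where
  "Aut d = {g. bij_betw g (verts d) (verts d)
              \<and> (\<forall>v\<in>verts d. \<forall>w\<in>verts d. adj v w \<longleftrightarrow> adj (g v) (g w))
              \<and> (\<forall>x. x \<notin> verts d \<longrightarrow> g x = x)}"

text \<open>local action sigma(g,v) = c_{gv} o g_v o c_v^{-1}, a permutation of Omega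
 (extended by the identity outside Omega)\<close>
definition sigma :: "nat \<Rightarrow> (nat list \<Rightarrow> nat list) \<Rightarrow> nat list \<Rightarrow> nat \<Rightarrow> nat" where
  "sigma d g v i = (if i \<in> Omega d then col (g v) (g (nbr v i)) else i)"

definition perm_group :: "nat \<Rightarrow> (nat \<Rightarrow> nat) set \<Rightarrow> bool" where
  "perm_group d F \<longleftrightarrow> F \<subseteq> {p. p permutes Omega d} \<and> id \<in> F
     \<and> (\<forall>p\<in>F. \<forall>q\<in>F. p \<circ> q \<in> F) \<and> (\<forall>p\<in>F. inv p \<in> F)"

definition orbit_of :: "(nat \<Rightarrow> nat) set \<Rightarrow> nat \<Rightarrow> nat set" where
  "orbit_of F x = (\<lambda>p. p x) ` F"

definition preserves_orbits :: "nat \<Rightarrow> (nat \<Rightarrow> nat) set \<Rightarrow> (nat \<Rightarrow> nat) set \<Rightarrow> bool" where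
  "preserves_orbits d F F' \<longleftrightarrow> (\<forall>a\<in>F'. \<forall>x\<in>Omega d. a ` orbit_of F x = orbit_of F x)"

definition two_transitive :: "nat \<Rightarrow> (nat \<Rightarrow> nat) set \<Rightarrow> bool" where
  "two_transitive d F' \<longleftrightarrow> (\<forall>x\<in>Omega d. \<forall>y\<in>Omega d. \<forall>x'\<in>Omega d. \<forall>y'\<in>Omega d.
      x \<noteq> y \<longrightarrow> x' \<noteq> y' \<longrightarrow> (\<exists>a\<in>F'. a x = x' \<and> a y = y'))"

definition U_grp :: "nat \<Rightarrow> (nat \<Rightarrow> nat) set \<Rightarrow> (nat list \<Rightarrow> nat list) set" where
  "U_grp d F' = {g\<in>Aut d. \<forall>v\<in>verts d. sigma d g v \<in> F'}"

definition G_grp :: "nat \<Rightarrow> (nat \<Rightarrow> nat) set \<Rightarrow> (nat list \<Rightarrow> nat list) set" where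
  "G_grp d F = {g\<in>Aut d. finite {v\<in>verts d. sigma d g v \<notin> F}}"

definition GFF :: "nat \<Rightarrow> (nat \<Rightarrow> nat) set \<Rightarrow> (nat \<Rightarrow> nat) set \<Rightarrow> (nat list \<Rightarrow> nat list) set" where
  "GFF d F F' = G_grp d F \<inter> U_grp d F'"

definition Gplus :: "nat \<Rightarrow> (nat \<Rightarrow> nat) set \<Rightarrow> (nat \<Rightarrow> nat) set \<Rightarrow> (nat list \<Rightarrow> nat list) set" where
  "Gplus d F F' = {g\<in>GFF d F F'. \<exists>v\<in>verts d. even (tdist v (g v))}"

definition geodesic_line :: "nat \<Rightarrow> (int \<Rightarrow> nat list) \<Rightarrow> bool" where
  "geodesic_line d l \<longleftrightarrow> (\<forall>n. l n \<in> verts d) \<and> (\<forall>m n. int (tdist (l m) (l n)) = \<bar>m - n\<bar>)"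

definition geom_edges :: "nat list set \<Rightarrow> nat list set set" where
  "geom_edges L = {{a, b} | a b. a \<in> L \<and> b \<in> L \<and> adj a b}"

end

theory Submission
  imports Defs
begin


lemma verts_snoc_iff: "v @ [i] \<in> verts d \<longleftrightarrow> v \<in> verts d \<and> i \<in> Omega d \<and> (v = [] \<or> last v \<noteq> i)"
  by (auto simp: verts_def successively_append_iff)

lemma verts_prefix: "v @ w \<in> verts d \<Longrightarrow> v \<in> verts d"
  by (auto simp: verts_def successively_append_iff)

lemma verts_Cons_iff: "c # w \<in> verts d \<longleftrightarrow> w \<in> verts d \<and> c \<in> Omega d \<and> (w = [] \<or> hd w \<noteq> c)"
  by (auto simp: verts_def successively_Cons)

lemma col_snoc1[simp]: "col a (a @ [i]) = i"
  by (simp add: col_def)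

lemma butlast_neq_snoc[simp]: "butlast b \<noteq> b @ [i]"
proof -
  have "length (butlast b) \<noteq> length (b @ [i])" by simp
  then show ?thesis by metis
qed

lemma col_snoc2[simp]: "col (b @ [i]) b = i"
proof -
  have "length (butlast b) \<noteq> length (b @ [i])" by simp
  then have "butlast b \<noteq> b @ [i]" by metis
  then show ?thesis by (simp add: col_def)
qed

lemma nbr_cases: "v \<in> verts d \<Longrightarrow> (v \<noteq> [] \<and> last v = i \<and> v = nbr v i @ [i]) \<or> ((v = [] \<or> last v \<noteq> i) \<and> nbr v i = v @ [i])"
  by (auto simp: nbr_def append_butlast_last_id)

lemma nbr_verts: "nbr v i \<in> verts d" if "v \<in> verts d" "i \<in> Omega d"
proof (cases "v \<noteq> [] \<and> last v = i")
  case True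
  then have "butlast v @ [last v] \<in> verts d" using that by (metis append_butlast_last_id)
  then have "butlast v \<in> verts d" by (rule verts_prefix)
  then show ?thesis using True by (simp add: nbr_def)
next
  case False
  then show ?thesis using that by (auto simp: nbr_def verts_snoc_iff)
qed

lemma adj_nbr: "adj v (nbr v i)"
proof (cases "v \<noteq> [] \<and> last v = i")
  case True
  then have "v = butlast v @ [i]" by (metis append_butlast_last_id)
  then show ?thesis using True unfolding nbr_def adj_def by metis
next
  case False
  then show ?thesis unfolding nbr_def adj_def by auto
qed

lemma col_nbr: "col v (nbr v i) = i"
  unfolding nbr_def
  using col_snoc2[of "butlast v" "last v"] by (auto simp del: col_snoc2)

lemma nbr_col: "v \<in> verts d \<Longrightarrow> w \<in> verts d \<Longrightarrow> adj v w \<Longrightarrow> nbr v (col v w) = w"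
  unfolding adj_def
  by (auto simp: nbr_def col_def verts_snoc_iff)

lemma col_Omega: "v \<in> verts d \<Longrightarrow> w \<in> verts d \<Longrightarrow> adj v w \<Longrightarrow> col v w \<in> Omega d"
  unfolding adj_def
  by (metis col_snoc1 col_snoc2 verts_snoc_iff)

lemma adj_sym: "adj v w \<longleftrightarrow> adj w v"
  unfolding adj_def by auto



lemma Aut_bij: "g \<in> Aut d \<Longrightarrow> bij_betw g (verts d) (verts d)"
  by (simp add: Aut_def)

lemma Aut_verts: "g \<in> Aut d \<Longrightarrow> v \<in> verts d \<Longrightarrow> g v \<in> verts d"
  by (rule bij_betw_apply[OF Aut_bij])

lemma Aut_adj: "g \<in> Aut d \<Longrightarrow> v \<in> verts d \<Longrightarrow> w \<in> verts d \<Longrightarrow> adj (g v) (g w) \<longleftrightarrow> adj v w"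
  by (simp add: Aut_def)

lemma Aut_out: "g \<in> Aut d \<Longrightarrow> x \<notin> verts d \<Longrightarrow> g x = x"
  by (simp add: Aut_def)

lemma Aut_inj: "g \<in> Aut d \<Longrightarrow> inj_on g (verts d)"
  using Aut_bij bij_betw_def by blast

lemma Aut_nbr:
  assumes "g \<in> Aut d" "v \<in> verts d" "i \<in> Omega d"
  shows "g (nbr v i) = nbr (g v) (sigma d g v i) \<and> sigma d g v i \<in> Omega d"
proof -
  have n: "nbr v i \<in> verts d" using assms nbr_verts by blast
  have a: "adj (g v) (g (nbr v i))" using Aut_adj[OF assms(1,2) n] adj_nbr by blast
  have gv: "g v \<in> verts d" "g (nbr v i) \<in> verts d" using Aut_verts assms n by blast+
  have s: "sigma d g v i = col (g v) (g (nbr v i))" using assms(3) by (simp add: sigma_def)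
  show ?thesis using nbr_col[OF gv a] col_Omega[OF gv a] s by simp
qed

lemma sigma_comp:
  assumes "g \<in> Aut d" "h \<in> Aut d" "v \<in> verts d"
  shows "sigma d (g \<circ> h) v = sigma d g (h v) \<circ> sigma d h v"
proof
  fix i
  show "sigma d (g \<circ> h) v i = (sigma d g (h v) \<circ> sigma d h v) i"
  proof (cases "i \<in> Omega d")
    case True
    from Aut_nbr[OF assms(2,3) True] have
      e: "h (nbr v i) = nbr (h v) (sigma d h v i)" and o: "sigma d h v i \<in> Omega d" by auto
    define j where "j = sigma d h v i"
    have "sigma d (g \<circ> h) v i = col (g (h v)) (g (h (nbr v i)))" using True by (simp add: sigma_def)
    also have "\<dots> = col (g (h v)) (g (nbr (h v) j))" using e j_def by simp
    also have "\<dots> = sigma d g (h v) j" using o j_def by (simp add: sigma_def)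
    finally show ?thesis using j_def by simp
  next
    case False
    then show ?thesis by (simp add: sigma_def)
  qed
qed

lemma Aut_comp:
  assumes "g \<in> Aut d" "h \<in> Aut d"
  shows "g \<circ> h \<in> Aut d"
proof -
  have b: "bij_betw (g \<circ> h) (verts d) (verts d)"
    using bij_betw_trans[OF Aut_bij[OF assms(2)] Aut_bij[OF assms(1)]] .
  have a: "\<forall>v\<in>verts d. \<forall>w\<in>verts d. adj v w \<longleftrightarrow> adj ((g \<circ> h) v) ((g \<circ> h) w)"
  proof (intro ballI)
    fix v w assume v: "v \<in> verts d" and w: "w \<in> verts d"
    have "adj ((g \<circ> h) v) ((g \<circ> h) w) \<longleftrightarrow> adj (h v) (h w)"
      using Aut_adj[OF assms(1) Aut_verts[OF assms(2) v] Aut_verts[OF assms(2) w]] by simp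
    also have "\<dots> \<longleftrightarrow> adj v w" using Aut_adj[OF assms(2) v w] .
    finally show "adj v w \<longleftrightarrow> adj ((g \<circ> h) v) ((g \<circ> h) w)" by simp
  qed
  have o: "\<forall>x. x \<notin> verts d \<longrightarrow> (g \<circ> h) x = x" using Aut_out[OF assms(1)] Aut_out[OF assms(2)] by simp
  show ?thesis using b a o unfolding Aut_def by simp
qed

lemma pg_comp: "perm_group d F \<Longrightarrow> p \<in> F \<Longrightarrow> q \<in> F \<Longrightarrow> p \<circ> q \<in> F"
  unfolding perm_group_def by blast

lemma pg_id: "perm_group d F \<Longrightarrow> id \<in> F"
  unfolding perm_group_def by blast

lemma pg_inv: "perm_group d F \<Longrightarrow> p \<in> F \<Longrightarrow> inv p \<in> F"
  unfolding perm_group_def by blast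

lemma pg_permutes: "perm_group d F \<Longrightarrow> p \<in> F \<Longrightarrow> p permutes Omega d"
  unfolding perm_group_def by blast

lemma GFF_comp:
  assumes F: "perm_group d F" and F': "perm_group d F'"
    and g: "g \<in> GFF d F F'" and h: "h \<in> GFF d F F'"
  shows "g \<circ> h \<in> GFF d F F'"
proof -
  have ga: "g \<in> Aut d" and ha: "h \<in> Aut d" using g h by (auto simp: GFF_def G_grp_def)
  have c: "g \<circ> h \<in> Aut d" using Aut_comp ga ha by blast
  have U: "\<forall>v\<in>verts d. sigma d (g \<circ> h) v \<in> F'"
  proof
    fix v assume v: "v \<in> verts d"
    have "sigma d g (h v) \<in> F'" "sigma d h v \<in> F'"
      using g h v Aut_verts[OF ha v] by (auto simp: GFF_def U_grp_def)
    then show "sigma d (g \<circ> h) v \<in> F'" using sigma_comp[OF ga ha v] pg_comp[OF F'] by simp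
  qed
  have fg: "finite {w\<in>verts d. sigma d g w \<notin> F}" and fh: "finite {v\<in>verts d. sigma d h v \<notin> F}"
    using g h by (auto simp: GFF_def G_grp_def)
  have "{v\<in>verts d. sigma d (g \<circ> h) v \<notin> F} \<subseteq>
        {v\<in>verts d. sigma d h v \<notin> F} \<union> (h -` {w\<in>verts d. sigma d g w \<notin> F} \<inter> verts d)"
  proof
    fix v assume "v \<in> {v\<in>verts d. sigma d (g \<circ> h) v \<notin> F}"
    then have v: "v \<in> verts d" and n: "sigma d (g \<circ> h) v \<notin> F" by auto
    then show "v \<in> {v\<in>verts d. sigma d h v \<notin> F} \<union> (h -` {w\<in>verts d. sigma d g w \<notin> F} \<inter> verts d)"
      using sigma_comp[OF ga ha v] pg_comp[OF F] Aut_verts[OF ha v] by auto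
  qed
  moreover have "finite (h -` {w\<in>verts d. sigma d g w \<notin> F} \<inter> verts d)"
    using finite_vimage_IntI[OF fg Aut_inj[OF ha]] .
  ultimately have "finite {v\<in>verts d. sigma d (g \<circ> h) v \<notin> F}" using fh finite_subset by blast
  then show ?thesis using c U by (simp add: GFF_def G_grp_def U_grp_def)
qed

lemma sigma_id: "v \<in> verts d \<Longrightarrow> sigma d id v = id"
  by (rule ext) (simp add: sigma_def col_nbr)

lemma id_Aut: "id \<in> Aut d"
  unfolding Aut_def by simp

lemma id_GFF:
  assumes F: "perm_group d F" and F': "perm_group d F'"
  shows "id \<in> GFF d F F'"
proof -
  have "{v \<in> verts d. sigma d id v \<notin> F} = {}" using sigma_id pg_id[OF F] by auto
  then have fin: "finite {v \<in> verts d. sigma d id v \<notin> F}" by (simp only: finite.emptyI)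
  have U: "\<forall>v\<in>verts d. sigma d id v \<in> F'" using sigma_id pg_id[OF F'] by simp
  show ?thesis unfolding GFF_def G_grp_def U_grp_def using fin U id_Aut by blast
qed

lemma funpow_GFF:
  assumes F: "perm_group d F" and F': "perm_group d F'" and g: "g \<in> GFF d F F'"
  shows "g ^^ n \<in> GFF d F F'"
proof (induction n)
  case 0 then show ?case using id_GFF[OF F F'] by (simp add: id_def)
next
  case (Suc n)
  have "g ^^ Suc n = g \<circ> g ^^ n" by simp
  then show ?case using GFF_comp[OF F F' g Suc] by (simp only:)
qed



lemma finite_Omega: "finite (Omega d)" by (simp add: Omega_def)

lemma prefix_back:
  assumes V: "\<forall>w\<in>verts d. g w \<in> verts d" and I: "inj_on g (verts d)"
    and Lg: "\<forall>w\<in>verts d. length (g w) = length w"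
    and S: "\<forall>v i. v @ [i] \<in> verts d \<longrightarrow> g (v @ [i]) = g v @ [\<phi> v i]"
    and v: "v \<in> verts d" and w: "w \<in> verts d" and e: "g w = g v @ [j]"
  shows "\<exists>i. w = v @ [i]"
proof -
  have "length w = Suc (length v)" using e Lg v w by (metis length_append_singleton)
  then have "w \<noteq> []" by auto
  then have ww: "w = butlast w @ [last w]" by (metis append_butlast_last_id)
  then have bw: "butlast w \<in> verts d" using w verts_prefix by metis
  have "g w = g (butlast w) @ [\<phi> (butlast w) (last w)]" using S w ww by metis
  then have "g (butlast w) = g v" using e by simp
  then have "butlast w = v" using I bw v inj_on_def by metis
  then show ?thesis using ww by metis
qed

lemma prefix_Aut:
  assumes V: "\<forall>w\<in>verts d. g w \<in> verts d" and I: "inj_on g (verts d)"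
    and Lg: "\<forall>w\<in>verts d. length (g w) = length w"
    and O: "\<forall>x. x \<notin> verts d \<longrightarrow> g x = x"
    and S: "\<forall>v i. v @ [i] \<in> verts d \<longrightarrow> g (v @ [i]) = g v @ [\<phi> v i]"
  shows "g \<in> Aut d"
proof -
  have surj: "verts d \<subseteq> g ` verts d"
  proof
    fix w assume w: "w \<in> verts d"
    define A where "A = {x\<in>verts d. length x = length w}"
    have "A \<subseteq> {xs. set xs \<subseteq> Omega d \<and> length xs = length w}" unfolding A_def verts_def by auto
    then have fA: "finite A" using finite_lists_length_eq[OF finite_Omega] finite_subset by blast
    have "g ` A \<subseteq> A" unfolding A_def using V Lg by auto
    moreover have "inj_on g A" using I unfolding A_def by (rule inj_on_subset) auto
    ultimately have "g ` A = A" using endo_inj_surj fA by blast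
    moreover have "w \<in> A" using w A_def by simp
    ultimately show "w \<in> g ` verts d" unfolding A_def by blast
  qed
  have b: "bij_betw g (verts d) (verts d)" unfolding bij_betw_def using I V surj by blast
  have a: "\<forall>v\<in>verts d. \<forall>w\<in>verts d. adj v w \<longleftrightarrow> adj (g v) (g w)"
  proof (intro ballI iffI)
    fix v w assume v: "v \<in> verts d" and w: "w \<in> verts d" and "adj v w"
    then show "adj (g v) (g w)" unfolding adj_def using S by metis
  next
    fix v w assume v: "v \<in> verts d" and w: "w \<in> verts d" and "adj (g v) (g w)"
    then consider j where "g w = g v @ [j]" | j where "g v = g w @ [j]" unfolding adj_def by blast
    then show "adj v w"
    proof cases
      case 1 then show ?thesis using prefix_back[OF V I Lg S v w] unfolding adj_def by blast
    next
      case 2 then show ?thesis using prefix_back[OF V I Lg S w v] unfolding adj_def by blast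
    qed
  qed
  show ?thesis unfolding Aut_def using b a O by blast
qed

lemma prefix_sigma:
  assumes S: "\<forall>v i. v @ [i] \<in> verts d \<longrightarrow> g (v @ [i]) = g v @ [\<phi> v i]"
    and v: "v \<in> verts d" and i: "i \<in> Omega d"
  shows "sigma d g v i = (if v \<noteq> [] \<and> last v = i then \<phi> (butlast v) i else \<phi> v i)"
proof (cases "v \<noteq> [] \<and> last v = i")
  case True
  then have vv: "v = butlast v @ [i]" by (metis append_butlast_last_id)
  then have "g v = g (butlast v) @ [\<phi> (butlast v) i]" using S v by metis
  moreover have "nbr v i = butlast v" using True by (simp add: nbr_def)
  ultimately show ?thesis using True i by (simp add: sigma_def)
next
  case False
  then have n: "nbr v i = v @ [i]" by (auto simp: nbr_def)
  then have "v @ [i] \<in> verts d" using nbr_verts[OF v i] by simp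
  then have "g (v @ [i]) = g v @ [\<phi> v i]" using S by blast
  then have "sigma d g v i = \<phi> v i" using i n by (simp add: sigma_def)
  then show ?thesis by (simp only: if_not_P[OF False])
qed

definition rrefl :: "nat \<Rightarrow> (nat \<Rightarrow> nat) \<Rightarrow> (nat \<Rightarrow> nat \<Rightarrow> nat) \<Rightarrow> nat list \<Rightarrow> nat list" where
  "rrefl d a B w = (if w \<in> verts d then (case w of [] \<Rightarrow> [] | c # r \<Rightarrow> a c # map (B c) r) else w)"

locale rr =
  fixes d :: nat and a :: "nat \<Rightarrow> nat" and B :: "nat \<Rightarrow> nat \<Rightarrow> nat"
  assumes a: "a permutes Omega d"
    and B: "\<And>c. c \<in> Omega d \<Longrightarrow> B c permutes Omega d"
    and Bc: "\<And>c. c \<in> Omega d \<Longrightarrow> B c c = a c"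
begin

abbreviation "R \<equiv> rrefl d a B"

lemma R_Nil: "R [] = []"
  by (simp add: rrefl_def verts_def)

lemma R_Cons: "c # r \<in> verts d \<Longrightarrow> R (c # r) = a c # map (B c) r"
  by (simp add: rrefl_def)

lemma R_verts: assumes w: "w \<in> verts d" shows "R w \<in> verts d"
proof (cases w)
  case Nil then show ?thesis using w R_Nil by simp
next
  case (Cons c r)
  then have c: "c \<in> Omega d" and r: "r \<in> verts d" and h: "r = [] \<or> hd r \<noteq> c"
    using w Cons verts_Cons_iff by auto
  have ac: "a c \<in> Omega d" using a c by (simp add: permutes_in_image)
  have ij: "inj (B c)" using B[OF c] permutes_inj by blast
  have mr: "map (B c) r \<in> verts d"
    using r B[OF c] ij unfolding verts_def
    by (auto simp: successively_map permutes_in_image inj_eq elim!: successively_mono)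
  have "map (B c) r = [] \<or> hd (map (B c) r) \<noteq> a c"
    using h ij Bc[OF c] by (cases r) (auto, metis injD)
  then show ?thesis using Cons w R_Cons mr ac verts_Cons_iff by simp
qed

lemma R_len: "w \<in> verts d \<Longrightarrow> length (R w) = length w"
  by (cases w) (auto simp: R_Nil R_Cons)

lemma R_inj: "inj_on R (verts d)"
proof (rule inj_onI)
  fix v w assume v: "v \<in> verts d" and w: "w \<in> verts d" and e: "R v = R w"
  show "v = w"
  proof (cases v)
    case Nil then show ?thesis using e R_len v w by (metis length_0_conv)
  next
    case (Cons c r)
    then obtain c' r' where w': "w = c' # r'" using e R_len v w by (metis length_0_conv neq_Nil_conv)
    have "a c = a c'" "map (B c) r = map (B c') r'" using e Cons w' R_Cons v w by auto
    then have cc: "c = c'" using permutes_inj[OF a] by (simp add: inj_eq)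
    have "inj (B c)" using B permutes_inj Cons v verts_Cons_iff by blast
    then have "r = r'" using \<open>map (B c) r = map (B c') r'\<close> cc by simp
    then show ?thesis using Cons w' cc by simp
  qed
qed

definition "phi v i = (if v = [] then a i else B (hd v) i)"

lemma R_snoc: "\<forall>v i. v @ [i] \<in> verts d \<longrightarrow> R (v @ [i]) = R v @ [phi v i]"
proof (intro allI impI)
  fix v i assume vi: "v @ [i] \<in> verts d"
  show "R (v @ [i]) = R v @ [phi v i]"
  proof (cases v)
    case Nil then show ?thesis using vi R_Cons R_Nil by (simp add: phi_def)
  next
    case (Cons c r)
    then have "c # r \<in> verts d" using vi verts_prefix by (metis append_Cons)
    then show ?thesis using vi Cons R_Cons by (simp add: phi_def)
  qed
qed

lemma R_out: "\<forall>x. x \<notin> verts d \<longrightarrow> R x = x"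
  by (simp add: rrefl_def)

lemma R_Aut: "R \<in> Aut d"
  using prefix_Aut[OF _ R_inj _ R_out R_snoc] R_verts R_len by blast

lemma R_sigma: "v \<in> verts d \<Longrightarrow> sigma d R v = (if v = [] then a else B (hd v))"
proof (rule ext)
  fix i assume v: "v \<in> verts d"
  show "sigma d R v i = (if v = [] then a else B (hd v)) i"
  proof (cases "i \<in> Omega d")
    case iO: True
    note s = prefix_sigma[OF R_snoc v iO]
    show ?thesis
    proof (cases "v \<noteq> [] \<and> last v = i")
      case T: True
      show ?thesis
      proof (cases "butlast v = []")
        case True
        then have "v = [i]" using T by (metis append_butlast_last_id append_Nil)
        then show ?thesis using s Bc[OF iO] True by (simp add: phi_def)
      next
        case False
        then have "hd (butlast v) = hd v" using T by (metis append_butlast_last_id hd_append2)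
        then show ?thesis using s T False by (simp add: phi_def)
      qed
    next
      case False then show ?thesis using s by (auto simp: phi_def)
    qed
  next
    case False
    then have "a i = i" "v \<noteq> [] \<Longrightarrow> B (hd v) i = i"
      using permutes_not_in[OF a] permutes_not_in[OF B] v verts_Cons_iff
      by (auto simp: neq_Nil_conv)
    then show ?thesis using False by (simp add: sigma_def)
  qed
qed

lemma R_GFF:
  assumes "a \<in> F'" "\<And>c. c \<in> Omega d \<Longrightarrow> B c \<in> F" "F \<subseteq> F'"
  shows "R \<in> GFF d F F'"
proof -
  have hd: "v \<in> verts d \<Longrightarrow> v \<noteq> [] \<Longrightarrow> hd v \<in> Omega d" for v
    using verts_Cons_iff by (cases v) auto
  have U: "\<forall>v\<in>verts d. sigma d R v \<in> F'" using R_sigma assms hd by auto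
  have "{v\<in>verts d. sigma d R v \<notin> F} \<subseteq> {[]}" using R_sigma assms hd by (auto split: if_splits)
  then have "finite {v\<in>verts d. sigma d R v \<notin> F}" using finite_subset by blast
  then show ?thesis using U R_Aut unfolding GFF_def G_grp_def U_grp_def by blast
qed

end

definition lmul :: "nat \<Rightarrow> nat \<Rightarrow> nat list \<Rightarrow> nat list" where
  "lmul d c w = (if w \<in> verts d then (if w \<noteq> [] \<and> hd w = c then tl w else c # w) else w)"

lemma lmul_verts: "c \<in> Omega d \<Longrightarrow> w \<in> verts d \<Longrightarrow> lmul d c w \<in> verts d"
  by (cases w) (auto simp: lmul_def verts_Cons_iff)

lemma lmul_invol: "c \<in> Omega d \<Longrightarrow> w \<in> verts d \<Longrightarrow> lmul d c (lmul d c w) = w"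
  by (cases w) (auto simp: lmul_def verts_Cons_iff)

lemma lmul_Nil: "lmul d c [] = [c]"
  by (simp add: lmul_def verts_def)

lemma lmul_snoc: "v @ [i] \<in> verts d \<Longrightarrow> lmul d c (v @ [i]) = (if v = [] \<and> i = c then [] else lmul d c v @ [i])"
  using verts_prefix[of v "[i]" d] by (cases v) (auto simp: lmul_def)

lemma lmul_adj1:
  assumes c: "c \<in> Omega d" and vi: "v @ [i] \<in> verts d"
  shows "adj (lmul d c v) (lmul d c (v @ [i]))"
  using lmul_snoc[OF vi] lmul_Nil unfolding adj_def by auto

lemma lmul_Aut: "c \<in> Omega d \<Longrightarrow> lmul d c \<in> Aut d"
proof -
  assume c: "c \<in> Omega d"
  have b: "bij_betw (lmul d c) (verts d) (verts d)"
    by (rule bij_betw_byWitness[where f'="lmul d c"]) (auto simp: lmul_invol lmul_verts c)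
  have fw: "adj (lmul d c v) (lmul d c w)" if "v \<in> verts d" "w \<in> verts d" "adj v w" for v w
    using that lmul_adj1[OF c] adj_sym unfolding adj_def by metis
  have a: "\<forall>v\<in>verts d. \<forall>w\<in>verts d. adj v w \<longleftrightarrow> adj (lmul d c v) (lmul d c w)"
    using fw lmul_invol[OF c] lmul_verts[OF c] by metis
  have o: "\<forall>x. x \<notin> verts d \<longrightarrow> lmul d c x = x" by (simp add: lmul_def)
  show ?thesis unfolding Aut_def using b a o by blast
qed

lemma lmul_sigma: "c \<in> Omega d \<Longrightarrow> v \<in> verts d \<Longrightarrow> sigma d (lmul d c) v = id"
proof (rule ext)
  fix i assume c: "c \<in> Omega d" and v: "v \<in> verts d"
  show "sigma d (lmul d c) v i = id i"
  proof (cases "i \<in> Omega d")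
    case True
    have nv: "nbr v i \<in> verts d" using nbr_verts v True by blast
    show ?thesis
    proof (cases "v \<noteq> [] \<and> last v = i")
      case T: True
      then have vv: "v = nbr v i @ [i]" "nbr v i = butlast v"
        by (auto simp: nbr_def append_butlast_last_id)
      then have "lmul d c v = (if nbr v i = [] \<and> i = c then [] else lmul d c (nbr v i) @ [i])"
        using lmul_snoc v by metis
      then show ?thesis using True lmul_Nil by (auto simp: sigma_def col_def)
    next
      case False
      then have n: "nbr v i = v @ [i]" by (auto simp: nbr_def)
      then have "lmul d c (nbr v i) = (if v = [] \<and> i = c then [] else lmul d c v @ [i])"
        using lmul_snoc nv by metis
      then show ?thesis using True lmul_Nil by (auto simp: sigma_def col_def)
    qed
  next
    case False then show ?thesis by (simp add: sigma_def)
  qed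
qed

lemma lmul_GFF:
  assumes F: "perm_group d F" and F': "perm_group d F'" and c: "c \<in> Omega d"
  shows "lmul d c \<in> GFF d F F'"
proof -
  have "{v \<in> verts d. sigma d (lmul d c) v \<notin> F} = {}" using lmul_sigma[OF c] pg_id[OF F] by auto
  then have fin: "finite {v \<in> verts d. sigma d (lmul d c) v \<notin> F}" by (simp only: finite.emptyI)
  have U: "\<forall>v\<in>verts d. sigma d (lmul d c) v \<in> F'" using lmul_sigma[OF c] pg_id[OF F'] by simp
  show ?thesis unfolding GFF_def G_grp_def U_grp_def using fin U lmul_Aut[OF c] by blast
qed



fun altw :: "nat \<Rightarrow> nat \<Rightarrow> nat \<Rightarrow> nat list" where
  "altw u v 0 = []"
| "altw u v (Suc n) = u # altw v u n"

definition line :: "(nat \<Rightarrow> nat) \<Rightarrow> nat \<Rightarrow> nat \<Rightarrow> int \<Rightarrow> nat list" where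
  "line b u v n = (if n \<ge> 0 then altw u v (nat n) else altw (b u) (b v) (nat (-n)))"

lemma altw_map: "map f (altw u v n) = altw (f u) (f v) n"
  by (induction n arbitrary: u v) auto

lemma altw_len[simp]: "length (altw u v n) = n"
  by (induction n arbitrary: u v) auto

lemma altw_hd: "n > 0 \<Longrightarrow> hd (altw u v n) = u"
  by (cases n) auto

lemma altw_verts: "u \<in> Omega d \<Longrightarrow> v \<in> Omega d \<Longrightarrow> u \<noteq> v \<Longrightarrow> altw u v n \<in> verts d"
proof (induction n arbitrary: u v)
  case 0 then show ?case by (simp add: verts_def)
next
  case (Suc n)
  then have "altw v u n \<in> verts d" by auto
  moreover have "altw v u n = [] \<or> hd (altw v u n) \<noteq> u" using Suc.prems altw_hd by (cases n) auto
  ultimately show ?case using Suc.prems verts_Cons_iff by simp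
qed

lemma altw_prefix: "m \<le> n \<Longrightarrow> \<exists>ys. altw u v n = altw u v m @ ys"
proof (induction m arbitrary: n u v)
  case 0 then show ?case by simp
next
  case (Suc m)
  then obtain n' where "n = Suc n'" "m \<le> n'" by (cases n) auto
  then show ?case using Suc.IH[of n' v u] by auto
qed

lemma lcp_append: "lcp xs (xs @ ys) = length xs"
  by (induction xs) auto

lemma lcp_sym: "lcp xs ys = lcp ys xs"
  by (induction xs ys rule: lcp.induct) auto

lemma tdist_sym: "tdist v w = tdist w v"
  by (simp add: tdist_def lcp_sym)

lemma tdist_prefix: "tdist xs (xs @ ys) = length ys"
  by (simp add: tdist_def lcp_append)

lemma lcp_zero: "xs = [] \<or> ys = [] \<or> hd xs \<noteq> hd ys \<Longrightarrow> lcp xs ys = 0"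
  by (cases xs; cases ys) auto

lemma tdist_zero: "lcp xs ys = 0 \<Longrightarrow> tdist xs ys = length xs + length ys"
  by (simp add: tdist_def)

lemma altw_dist: "int (tdist (altw u v m) (altw u v n)) = \<bar>int m - int n\<bar>"
proof (cases "m \<le> n")
  case True
  then obtain ys where "altw u v n = altw u v m @ ys" using altw_prefix by blast
  moreover then have "length ys = n - m" using altw_len[of u v n] altw_len[of u v m] by (metis add_diff_cancel_left' length_append)
  ultimately show ?thesis using True by (simp add: tdist_prefix)
next
  case False
  then obtain ys where "altw u v m = altw u v n @ ys" using altw_prefix by (meson nat_le_linear)
  moreover then have "length ys = m - n" using altw_len[of u v n] altw_len[of u v m] by (metis add_diff_cancel_left' length_append)
  ultimately show ?thesis using False by (simp add: tdist_prefix tdist_sym)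
qed

lemma line_geo:
  assumes u: "u \<in> Omega d" and v: "v \<in> Omega d" and uv: "u \<noteq> v"
    and b: "b permutes Omega d" and bu: "b u \<noteq> u"
  shows "geodesic_line d (line b u v)"
proof -
  have bu': "b u \<in> Omega d" "b v \<in> Omega d" using b u v by (auto simp: permutes_in_image)
  have bv: "b u \<noteq> b v" using uv permutes_inj[OF b] by (auto dest: injD)
  have V: "line b u v n \<in> verts d" for n
    using altw_verts[OF u v uv] altw_verts[OF bu' bv] by (simp add: line_def)
  have mixed: "int (tdist (altw u v m) (altw (b u) (b v) n)) = int m + int n" for m n
  proof -
    have "lcp (altw u v m) (altw (b u) (b v) n) = 0"
      by (rule lcp_zero) (metis altw_hd bu altw_len gr0I length_0_conv)
    then show ?thesis by (simp add: tdist_zero)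
  qed
  have D: "int (tdist (line b u v m) (line b u v n)) = \<bar>m - n\<bar>" for m n
  proof (cases "m \<ge> 0"; cases "n \<ge> 0")
    assume "m \<ge> 0" "n \<ge> 0" then show ?thesis using altw_dist by (simp add: line_def)
  next
    assume "m \<ge> 0" "\<not> n \<ge> 0" then show ?thesis using mixed by (simp add: line_def)
  next
    assume "\<not> m \<ge> 0" "n \<ge> 0" then show ?thesis using mixed by (simp add: line_def tdist_sym)
  next
    assume "\<not> m \<ge> 0" "\<not> n \<ge> 0" then show ?thesis using altw_dist by (simp add: line_def)
  qed
  show ?thesis unfolding geodesic_line_def using V D by blast
qed

lemma adj_tdist: "adj v w \<Longrightarrow> tdist v w = 1"
  unfolding adj_def using tdist_prefix tdist_sym by (metis One_nat_def length_Cons list.size(3))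

lemma line_refl:
  assumes F: "perm_group d F" and F': "perm_group d F'" and FF: "F \<subseteq> F'"
    and po: "preserves_orbits d F F'"
    and u: "u \<in> Omega d" and v: "v \<in> Omega d" and uv: "u \<noteq> v"
    and b: "b \<in> F" and bu: "b u \<noteq> u"
    and aF: "a \<in> F'" and a1: "a u = b u" and a2: "a (b u) = u"
  shows "\<exists>R\<in>GFF d F F'. R [] = [] \<and> (\<forall>n. R (line b u v n) = line b u v (-n))"
proof -
  have bp: "b permutes Omega d" using pg_permutes[OF F b] .
  have ap: "a permutes Omega d" using pg_permutes[OF F' aF] .
  define B where "B c = (if c = u then b else if c = b u then inv b else (SOME p. p \<in> F \<and> p c = a c))" for c
  have ex: "\<exists>p. p \<in> F \<and> p c = a c" if c: "c \<in> Omega d" for c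
  proof -
    have "c \<in> orbit_of F c" using pg_id[OF F] unfolding orbit_of_def by (metis id_apply image_eqI)
    then have "a c \<in> orbit_of F c" using po aF c unfolding preserves_orbits_def by blast
    then show ?thesis unfolding orbit_of_def by auto
  qed
  have binv: "inv b (b u) = u" using permutes_inverses[OF bp] by simp
  have BF: "B c \<in> F \<and> B c c = a c" if c: "c \<in> Omega d" for c
    using someI_ex[OF ex[OF c]] b a1 a2 binv pg_inv[OF F b] unfolding B_def by auto
  interpret rr d a B
    by unfold_locales (use ap BF pg_permutes[OF F] in auto)
  have G: "R \<in> GFF d F F'" by (rule R_GFF) (use aF BF FF in auto)
  have Bu: "B u = b" and Bbu: "B (b u) = inv b" using bu unfolding B_def by auto
  have bu': "b u \<in> Omega d" "b v \<in> Omega d" using bp u v by (auto simp: permutes_in_image)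
  have bv: "b u \<noteq> b v" using uv permutes_inj[OF bp] by (auto dest: injD)
  have line: "R (line b u v n) = line b u v (-n)" for n
  proof -
    consider "n = 0" | "n > 0" | "n < 0" by linarith
    then show ?thesis
    proof cases
      case 1 then show ?thesis by (simp add: line_def R_Nil)
    next
      case 2
      then obtain k where k: "nat n = Suc k" by (metis gr0_implies_Suc zero_less_nat_eq)
      have vv: "u # altw v u k \<in> verts d" using altw_verts[OF u v uv, where n="Suc k"] by simp
      have "R (line b u v n) = R (u # altw v u k)" using 2 k by (simp add: line_def)
      also have "\<dots> = b u # altw (b v) (b u) k" using R_Cons[OF vv] a1 Bu altw_map by simp
      also have "\<dots> = line b u v (-n)" using 2 k by (simp add: line_def)
      finally show ?thesis .
    next
      case 3
      then obtain k where k: "nat (-n) = Suc k" by (metis gr0_implies_Suc neg_0_less_iff_less zero_less_nat_eq)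
      have vv: "b u # altw (b v) (b u) k \<in> verts d" using altw_verts[OF bu' bv, where n="Suc k"] by simp
      have "R (line b u v n) = R (b u # altw (b v) (b u) k)" using 3 k by (simp add: line_def)
      also have "\<dots> = u # altw v u k"
        using R_Cons[OF vv] a2 Bbu altw_map permutes_inverses[OF bp] by simp
      also have "\<dots> = line b u v (-n)" using 3 k by (simp add: line_def)
      finally show ?thesis .
    qed
  qed
  show ?thesis using G line R_Nil by blast
qed

lemma lmul_line:
  assumes u: "u \<in> Omega d" and v: "v \<in> Omega d" and uv: "u \<noteq> v"
    and b: "b permutes Omega d" and bvu: "b v = u"
  shows "lmul d u (line b u v n) = line b v u (n - 1)"
proof -
  have bu': "b u \<in> Omega d" using b u by (auto simp: permutes_in_image)
  have bv: "b u \<noteq> b v" using uv permutes_inj[OF b] by (auto dest: injD)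
  have buu: "b u \<noteq> u" using bv bvu by simp
  consider "n = 0" | "n > 0" | "n < 0" by linarith
  then show ?thesis
  proof cases
    case 1 then show ?thesis using lmul_Nil bvu by (simp add: line_def)
  next
    case 2
    then obtain k where k: "nat n = Suc k" by (metis gr0_implies_Suc zero_less_nat_eq)
    have vv: "u # altw v u k \<in> verts d" using altw_verts[OF u v uv, where n="Suc k"] by simp
    have "nat (n - 1) = k" using k by simp
    then show ?thesis using 2 k vv by (simp add: line_def lmul_def)
  next
    case 3
    then obtain k where k: "nat (-n) = Suc k" by (metis gr0_implies_Suc neg_0_less_iff_less zero_less_nat_eq)
    have vv: "b u # altw u (b u) k \<in> verts d" using altw_verts[OF bu' u buu, where n="Suc k"] by simp
    have "nat (1 - n) = Suc (Suc k)" using k by simp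
    then show ?thesis using 3 k vv bvu buu by (simp add: line_def lmul_def)
  qed
qed



lemma Gplus_I:
  assumes g: "geodesic_line d l" and k: "k \<in> GFF d F F'" and kt: "k (l 0) = l t" and e: "even t"
  shows "k \<in> Gplus d F F'"
proof -
  have v: "l 0 \<in> verts d" using g unfolding geodesic_line_def by blast
  have "int (tdist (l 0) (l t)) = \<bar>0 - t\<bar>" using g unfolding geodesic_line_def by blast
  then have "even (tdist (l 0) (k (l 0)))" using e kt by presburger
  then show ?thesis using v k unfolding Gplus_def by blast
qed

lemma range_shift:
  fixes l :: "int \<Rightarrow> 'b" and s t :: int
  assumes k: "\<forall>n. k (l n) = l (s * n + t)" and s: "s = 1 \<or> s = -1"
  shows "k ` range l = range l"
proof
  show "k ` range l \<subseteq> range l" using k by auto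
next
  show "range l \<subseteq> k ` range l"
  proof
    fix w assume "w \<in> range l"
    then obtain m where m: "w = l m" by blast
    have "s * (s * (m - t)) + t = m" using s by auto
    then have "k (l (s * (m - t))) = w" using k m by simp
    then show "w \<in> k ` range l" by blast
  qed
qed

lemma pow_shift:
  assumes k: "\<forall>n. k (l n) = l (n + s)"
  shows "(k ^^ m) (l n) = l (n + int m * s)"
proof (induction m)
  case 0 then show ?case by simp
next
  case (Suc m)
  have "(k ^^ Suc m) (l n) = k ((k ^^ m) (l n))" by simp
  also have "\<dots> = l (n + int m * s + s)" using Suc k by simp
  finally show ?case by (simp add: algebra_simps)
qed

lemma edge_form:
  assumes g: "geodesic_line d l" and e: "e \<in> geom_edges (range l)"
  shows "\<exists>n. e = {l n, l (n + 1)}"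
proof -
  obtain p q where e: "e = {l p, l q}" and a: "adj (l p) (l q)"
    using e unfolding geom_edges_def by blast
  have "int (tdist (l p) (l q)) = \<bar>p - q\<bar>" using g unfolding geodesic_line_def by blast
  then have "\<bar>p - q\<bar> = 1" using adj_tdist[OF a] by simp
  then have "q = p + 1 \<or> p = q + 1" by linarith
  then show ?thesis using e by (metis insert_commute)
qed

theorem mainTheorem8:
  fixes d :: nat and F F' :: "(nat \<Rightarrow> nat) set"
  assumes "d \<ge> 3"
    and "perm_group d F" and "perm_group d F'" and "F \<subseteq> F'"
    and "preserves_orbits d F F'"
    and "F \<noteq> {id}"
    and "two_transitive d F'"
  shows "\<exists>l. geodesic_line d l \<and>
           (\<exists>g\<in>Gplus d F F'. g ` range l = range l \<and> (\<forall>n. g (l n) = l (n + 2))) \<and>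
           (\<exists>h\<in>Gplus d F F'. h ` range l = range l \<and>
               (\<exists>n0. h (l n0) = l n0 \<and> (\<forall>n. h (l n) = l (2 * n0 - n)))) \<and>
           (\<forall>e\<in>geom_edges (range l). \<forall>e'\<in>geom_edges (range l).
               \<exists>k\<in>Gplus d F F'. k ` range l = range l \<and> k ` e = e')"
proof -
  note F = assms(2) and F' = assms(3) and FF = assms(4) and po = assms(5) and tt = assms(7)
  obtain b where b: "b \<in> F" "b \<noteq> id" using assms(6) pg_id[OF F] by blast
  have bp: "b permutes Omega d" using pg_permutes[OF F b(1)] .
  obtain x where x: "x \<in> Omega d" "b x \<noteq> x"
  proof (rule ccontr)
    assume "\<not> thesis"
    then have "\<forall>x\<in>Omega d. b x = x" using that by blast
    then have "b = id" using permutes_not_in[OF bp] by (metis eq_id_iff)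
    then show False using b by simp
  qed
  define y where "y = b x"
  define z where "z = b y"
  have y: "y \<in> Omega d" "z \<in> Omega d" using x bp unfolding y_def z_def by (auto simp: permutes_in_image)
  have xy: "x \<noteq> y" using x y_def by simp
  have yz: "y \<noteq> z" using xy permutes_inj[OF bp] unfolding y_def z_def by (metis injD)
  obtain a0 where a0: "a0 \<in> F'" "a0 y = z" "a0 z = y"
    using tt y yz unfolding two_transitive_def by metis
  obtain a2 where a2: "a2 \<in> F'" "a2 x = y" "a2 y = x"
    using tt x y xy unfolding two_transitive_def by metis
  define l where "l = line b y x"
  define l2 where "l2 = line b x y"
  obtain R0 where R0: "R0 \<in> GFF d F F'" "\<And>n. R0 (l n) = l (-n)"
    using line_refl[OF F F' FF po y(1) x(1) xy[symmetric] b(1) _ a0(1)] yz a0 unfolding l_def z_def by metis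
  obtain R2 where R2: "R2 \<in> GFF d F F'" "\<And>n. R2 (l2 n) = l2 (-n)"
    using line_refl[OF F F' FF po x(1) y(1) xy b(1) x(2) a2(1)] a2 unfolding l2_def y_def by metis
  have geo: "geodesic_line d l"
    unfolding l_def by (rule line_geo[OF y(1) x(1) xy[symmetric] bp]) (use yz z_def in simp)
  define L where "L = lmul d y"
  have LG: "L \<in> GFF d F F'" using lmul_GFF[OF F F' y(1)] L_def by simp
  have L1: "L (l n) = l2 (n - 1)" for n
    unfolding L_def l_def l2_def by (rule lmul_line[OF y(1) x(1) xy[symmetric] bp]) (simp add: y_def)
  have L2: "L (l2 m) = l (m + 1)" for m
  proof -
    have "l (m + 1) \<in> verts d" using geo unfolding geodesic_line_def by blast
    then have "L (L (l (m + 1))) = l (m + 1)" using lmul_invol[OF y(1)] L_def by simp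
    then show ?thesis using L1[of "m + 1"] by simp
  qed
  define R1 where "R1 = L \<circ> R2 \<circ> L"
  have R1G: "R1 \<in> GFF d F F'" unfolding R1_def using GFF_comp[OF F F'] LG R2(1) by blast
  have R1l: "R1 (l n) = l (2 - n)" for n using L1 L2 R2(2) unfolding R1_def by simp
  define T where "T = R1 \<circ> R0"
  define T' where "T' = R0 \<circ> R1"
  have TG: "T \<in> GFF d F F'" "T' \<in> GFF d F F'" unfolding T_def T'_def using GFF_comp[OF F F'] R0(1) R1G by blast+
  have Tl: "\<forall>n. T (l n) = l (n + 2)" unfolding T_def using R0(2) R1l by (simp add: add.commute)
  have T'l: "\<forall>n. T' (l n) = l (n + (-2))" unfolding T'_def using R0(2) R1l by simp
  define K where "K m = (if m \<ge> 0 then T ^^ nat m else T' ^^ nat (-m))" for m :: int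
  have KG: "K m \<in> GFF d F F'" for m unfolding K_def using funpow_GFF[OF F F'] TG by simp
  have Kl: "K m (l n) = l (n + 2 * m)" for m n
  proof (cases "m \<ge> 0")
    case True then show ?thesis using pow_shift[OF Tl, of "nat m" n] unfolding K_def by (simp add: mult.commute)
  next
    case False then show ?thesis using pow_shift[OF T'l, of "nat (-m)" n] unfolding K_def by (simp add: mult.commute)
  qed
  have part2: "\<exists>g\<in>Gplus d F F'. g ` range l = range l \<and> (\<forall>n. g (l n) = l (n + 2))"
  proof (intro bexI conjI)
    show "T ` range l = range l" by (rule range_shift[where s=1 and t=2]) (use Tl in auto)
    show "\<forall>n. T (l n) = l (n + 2)" using Tl .
    show "T \<in> Gplus d F F'" by (rule Gplus_I[OF geo TG(1), where t=2]) (use Tl in auto)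
  qed
  have part3: "\<exists>h\<in>Gplus d F F'. h ` range l = range l \<and>
               (\<exists>n0. h (l n0) = l n0 \<and> (\<forall>n. h (l n) = l (2 * n0 - n)))"
  proof (intro bexI conjI exI)
    show "R0 ` range l = range l" by (rule range_shift[where s="-1" and t=0]) (use R0(2) in auto)
    show "R0 (l 0) = l 0" using R0(2)[of 0] by simp
    show "\<forall>n. R0 (l n) = l (2 * 0 - n)" using R0(2) by simp
    show "R0 \<in> Gplus d F F'" by (rule Gplus_I[OF geo R0(1), where t=0]) (use R0(2) in auto)
  qed
  have part4: "\<forall>e\<in>geom_edges (range l). \<forall>e'\<in>geom_edges (range l).
               \<exists>k\<in>Gplus d F F'. k ` range l = range l \<and> k ` e = e'"
  proof (intro ballI)
    fix e e' assume e: "e \<in> geom_edges (range l)" and e': "e' \<in> geom_edges (range l)"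
    obtain n where n: "e = {l n, l (n + 1)}" using edge_form[OF geo e] by blast
    obtain n' where n': "e' = {l n', l (n' + 1)}" using edge_form[OF geo e'] by blast
    show "\<exists>k\<in>Gplus d F F'. k ` range l = range l \<and> k ` e = e'"
    proof (cases "even (n' - n)")
      case True
      define m where "m = (n' - n) div 2"
      have m2: "2 * m = n' - n" using True unfolding m_def by simp
      show ?thesis
      proof (intro bexI conjI)
        show "K m ` range l = range l" by (rule range_shift[where s=1 and t="2*m"]) (use Kl in auto)
        show "K m ` e = e'" using n n' Kl m2 by (simp add: algebra_simps)
        show "K m \<in> Gplus d F F'" by (rule Gplus_I[OF geo KG, where t="2*m"]) (use Kl in auto)
      qed
    next
      case False
      define m where "m = (n' + n + 1) div 2"
      have m2: "2 * m = n' + n + 1" using False unfolding m_def by presburger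
      have kl: "(K m \<circ> R0) (l j) = l (-1 * j + 2 * m)" for j using Kl R0(2) by simp
      have kG: "K m \<circ> R0 \<in> GFF d F F'" using GFF_comp[OF F F' KG R0(1)] .
      show ?thesis
      proof (intro bexI conjI)
        show "(K m \<circ> R0) ` range l = range l" by (rule range_shift[where s="-1" and t="2*m"]) (use kl in auto)
        have "(K m \<circ> R0) ` e = {l (n' + 1), l n'}" using n kl m2 by (simp add: algebra_simps)
        then show "(K m \<circ> R0) ` e = e'" using n' by (simp add: insert_commute)
        show "K m \<circ> R0 \<in> Gplus d F F'" by (rule Gplus_I[OF geo kG, where t="2*m"]) (use kl in auto)
      qed
    qed
  qed
  show ?thesis using geo part2 part3 part4 by blast
qed

end
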